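(* For every $P_{\rm r}>0$ and $\mathcal C_x\in[0,1)$, the ergodic rate $\mathcal R_{\rm E-E}=\mathbb E[\min(R_{\rm sr},R_{\rm rd})]$ equals \[ \mathcal R_{\rm E-E}=\int_0^\infty\!\!\int_0^\infty \sum_{m=0}^{m_{\rm rd}-1}\sum_{k=0}^m\binom mk\frac{P_{\rm s}^k\Gamma(k+m_{\rm sd})}{\Gamma(m+1)}\cdot\frac{x^{m_{\rm rr}-1}\Gamma\!\left(m_{\rm sr},\frac{P_{\rm r}x+1}{P_{\rm s}\theta_{\rm sr}}\Psi_r\!\left(\frac{P_{\rm r}x\mathcal C_x}{P_{\rm r}x+1}\right)\right)\beta_r^m\,e^{-(\beta_r+x/\theta_{\rm rr})}}{\Gamma(m_{\rm sd})\Gamma(m_{\rm rr})\Gamma(m_{\rm sr})\theta_{\rm sd}^{m_{\rm sd}}\theta_{\rm rr}^{m_{\rm rr}}\left(P_{\rm s}\beta_r+\frac1{\theta_{\rm sd}}\right)^{k+m_{\rm sd}}}\,dx\,dr, \] where $\beta_r=\frac{\Psi_r(\mathcal C_x)}{P_{\rm r}\theta_{\rm rd}(1-\mathcal C_x^2)}$ and $\Psi_r$ depends on the integration variable $r$.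
   Context: Let $P_{\rm s}>0$, $P_{\rm r}>0$ be the source and relay transmit powers. For links $ij\in\{\mathrm{sr},\mathrm{rr},\mathrm{rd},\mathrm{sd}\}$ let $g_{ij}$ be mutually independent random channel gains, $g_{ij}$ gamma distributed with integer shape parameter $m_{ij}\ge1$ and scale $\theta_{ij}=\pi_{ij}/m_{ij}$, where $\pi_{ij}=\mathbb E[g_{ij}]>0$; i.e. $g_{ij}$ has density $x^{m_{ij}-1}e^{-x/\theta_{ij}}/(\Gamma(m_{ij})\theta_{ij}^{m_{ij}})$ for $x\ge0$. For a circularity coefficient $\mathcal C_x\in[0,1)$ define $R_{\rm sr}(P_{\rm r},\mathcal C_x)=\tfrac12\log_2\frac{(P_{\rm s}g_{\rm sr}+P_{\rm r}g_{\rm rr}+1)^2-(P_{\rm r}g_{\rm rr}\mathcal C_x)^2}{(P_{\rm r}g_{\rm rr}+1)^2-(P_{\rm r}g_{\rm rr}\mathcal C_x)^2}$ and $R_{\rm rd}(P_{\rm r},\mathcal C_x)=\tfrac12\log_2\frac{(P_{\rm r}g_{\rm rd}+P_{\rm s}g_{\rm sd}+1)^2-(P_{\rm r}g_{\rm rd}\mathcal C_x)^2}{(P_{\rm s}g_{\rm sd}+1)^2}$. For $r>0$ put $\gamma=2^{2r}-1$ and $\Psi_r(x)=\sqrt{1+\gamma(1-x^2)}-1$. $\Gamma(a,x)=\int_x^\infty t^{a-1}e^{-t}dt$ is the upper incomplete gamma function. *)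

theory Defs
  imports "HOL-Probability.Probability"
begin

datatype link = SR | RR | RD | SD

definition gamma_density :: "nat \<Rightarrow> real \<Rightarrow> real \<Rightarrow> real" where
  "gamma_density m \<theta> x =
     (if x < 0 then 0 else x ^ (m - 1) * exp (- x / \<theta>) / (Gamma (real m) * \<theta> ^ m))"

definition upper_Gamma :: "real \<Rightarrow> real \<Rightarrow> real" where
  "upper_Gamma a x = (LBINT t:{x..}. t powr (a - 1) * exp (- t))"

definition R_sr :: "real \<Rightarrow> real \<Rightarrow> real \<Rightarrow> real \<Rightarrow> real \<Rightarrow> real" where
  "R_sr Ps Pr Cx gsr grr =
     1/2 * log 2 (((Ps * gsr + Pr * grr + 1)\<^sup>2 - (Pr * grr * Cx)\<^sup>2) /
                  ((Pr * grr + 1)\<^sup>2 - (Pr * grr * Cx)\<^sup>2))"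

definition R_rd :: "real \<Rightarrow> real \<Rightarrow> real \<Rightarrow> real \<Rightarrow> real \<Rightarrow> real" where
  "R_rd Ps Pr Cx grd gsd =
     1/2 * log 2 (((Pr * grd + Ps * gsd + 1)\<^sup>2 - (Pr * grd * Cx)\<^sup>2) / (Ps * gsd + 1)\<^sup>2)"

definition Psi :: "real \<Rightarrow> real \<Rightarrow> real" where
  "Psi r x = sqrt (1 + (2 powr (2 * r) - 1) * (1 - x\<^sup>2)) - 1"

end

theory Submission
  imports Defs
begin


lemma sqrt_lt_iff: "0 \<le> x \<Longrightarrow> 0 \<le> y \<Longrightarrow> sqrt x < y \<longleftrightarrow> x < y^2"
  by (metis real_sqrt_abs real_sqrt_less_iff abs_of_nonneg power2_eq_square)

lemma sq_less_iff: "0 \<le> (x::real) \<Longrightarrow> 0 \<le> y \<Longrightarrow> x^2 < y^2 \<longleftrightarrow> x < y"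
  using power_less_imp_less_base power_strict_mono by (metis zero_less_numeral)

lemma log_half_iff: "0 < q \<Longrightarrow> r < 1/2 * log 2 q \<longleftrightarrow> 2 powr (2*r) < q"
proof -
  assume q: "0 < q"
  have "r < 1/2 * log 2 q \<longleftrightarrow> 2*r < log 2 q" by auto
  also have "\<dots> \<longleftrightarrow> 2 powr (2*r) < q" using q by (simp add: less_log_iff)
  finally show ?thesis .
qed

lemma LA:
  fixes Ps Pr Cx r a b :: real
  assumes "Ps > 0" "Pr > 0" "0 \<le> Cx" "Cx < 1" "a \<ge> 0" "b \<ge> 0" "r \<ge> 0"
  shows "r < R_sr Ps Pr Cx a b \<longleftrightarrow> (Pr*b+1) * Psi r (Pr*b*Cx/(Pr*b+1)) < Ps*a"
proof -
  define D where "D = Pr*b+1"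
  define e where "e = Pr*b*Cx"
  define u where "u = Ps*a + D"
  define K where "K = (2::real) powr (2*r)"
  have D: "D > 0" using assms by (simp add: D_def add_nonneg_pos)
  have e0: "0 \<le> e" using assms by (simp add: e_def)
  have eD: "e < D"
  proof -
    have "Pr*b*Cx \<le> Pr*b" using assms by (intro mult_left_le) auto
    thus ?thesis unfolding e_def D_def by linarith
  qed
  have uD: "u \<ge> D" using assms by (simp add: u_def)
  have den: "D^2 - e^2 > 0" using e0 eD by (simp add: power_strict_mono)
  have num: "u^2 - e^2 > 0"
  proof -
    have "e < u" using eD uD by linarith
    hence "e^2 < u^2" using e0 by (intro power_strict_mono) auto
    thus ?thesis by simp
  qed
  have K0: "K > 0" by (simp add: K_def)
  have rad0: "1 + (K-1)*(1-(e/D)^2) \<ge> 0"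
  proof -
    have "(e/D)^2 \<le> 1" using e0 eD D by (simp add: power_le_one)
    moreover have "K \<ge> 1" unfolding K_def using assms by (intro ge_one_powr_ge_zero) auto
    ultimately show ?thesis by (simp add: add_nonneg_nonneg)
  qed
  have R: "R_sr Ps Pr Cx a b = 1/2 * log 2 ((u^2 - e^2)/(D^2-e^2))"
    unfolding R_sr_def u_def D_def e_def by (simp add: algebra_simps)
  have "r < R_sr Ps Pr Cx a b \<longleftrightarrow> K < (u^2 - e^2)/(D^2-e^2)"
    unfolding R K_def by (rule log_half_iff) (use num den in simp)
  also have "\<dots> \<longleftrightarrow> K*(D^2-e^2) + e^2 < u^2" using den by (simp add: pos_less_divide_eq less_diff_eq)
  also have "K*(D^2-e^2) + e^2 = (D * sqrt (1 + (K-1)*(1-(e/D)^2)))^2"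
  proof -
    have "(D * sqrt (1 + (K-1)*(1-(e/D)^2)))^2 = D^2 * (1 + (K-1)*(1-(e/D)^2))"
      using rad0 by (simp add: power_mult_distrib)
    also have "\<dots> = K*(D^2-e^2) + e^2" using D by (simp add: field_simps power2_eq_square)
    finally show ?thesis by simp
  qed
  also have "(D * sqrt (1 + (K-1)*(1-(e/D)^2)))^2 < u^2 \<longleftrightarrow> D * sqrt (1 + (K-1)*(1-(e/D)^2)) < u"
    using D uD rad0 by (intro sq_less_iff) auto
  also have "\<dots> \<longleftrightarrow> D * Psi r (e/D) < Ps*a"
    unfolding Psi_def K_def u_def by (simp add: algebra_simps)
  finally show ?thesis unfolding D_def e_def by (simp add: mult.assoc)
qed

lemma LB:
  fixes Ps Pr Cx r c d :: real
  assumes "Ps > 0" "Pr > 0" "0 \<le> Cx" "Cx < 1" "c \<ge> 0" "d \<ge> 0" "r \<ge> 0"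
  shows "r < R_rd Ps Pr Cx c d \<longleftrightarrow> (Ps*d+1) * Psi r Cx / (Pr*(1-Cx^2)) < c"
proof -
  define S where "S = Ps*d+1"
  define v where "v = Pr*c"
  define t where "t = 1 - Cx^2"
  define K where "K = (2::real) powr (2*r)"
  define N where "N = (v+S)^2 - (v * Cx)^2"
  have S: "S > 0" using assms by (simp add: S_def add_nonneg_pos)
  have v: "v \<ge> 0" using assms by (simp add: v_def)
  have t: "t > 0" using assms unfolding t_def
    by (metis abs_of_nonneg diff_gt_0_iff_gt power_strict_mono less_eq_real_def abs_square_less_1)
  have K: "K \<ge> 1" unfolding K_def using assms by (intro ge_one_powr_ge_zero) auto
  have N: "N > 0"
  proof -
    have "(v * Cx)^2 \<le> v^2" using t v unfolding t_def by (simp add: power_mult_distrib mult_left_le)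
    moreover have "v^2 < (v+S)^2" using v S by (intro power_strict_mono) auto
    ultimately show ?thesis unfolding N_def by linarith
  qed
  have rad0: "1 + (K-1)*t \<ge> 0" using K t by simp
  have R: "R_rd Ps Pr Cx c d = 1/2 * log 2 (N/S^2)"
    unfolding R_rd_def N_def S_def v_def by (simp add: algebra_simps)
  have "r < R_rd Ps Pr Cx c d \<longleftrightarrow> K < N/S^2"
    unfolding R K_def by (rule log_half_iff) (use N S in simp)
  also have "\<dots> \<longleftrightarrow> t*(K*S^2) < t*N" using S t by (simp add: pos_less_divide_eq)
  also have "t*N - t*(K*S^2) = (v * t + S)^2 - (S * sqrt (1+(K-1)*t))^2"
    using rad0 unfolding N_def t_def by (simp add: power_mult_distrib algebra_simps power2_eq_square)
  hence "t*(K*S^2) < t*N \<longleftrightarrow> (S * sqrt (1+(K-1)*t))^2 < (v * t + S)^2" by linarith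
  also have "\<dots> \<longleftrightarrow> S * sqrt (1+(K-1)*t) < v * t + S"
    using S t v rad0 by (intro sq_less_iff) auto
  also have "\<dots> \<longleftrightarrow> S * (sqrt (1+(K-1)*t) - 1) / (Pr*t) < c"
    using t assms unfolding v_def by (simp add: pos_divide_less_eq algebra_simps)
  finally show ?thesis unfolding S_def t_def K_def Psi_def by simp
qed


lemma R_sr_nonneg:
  fixes Ps Pr Cx a b :: real
  assumes "Ps > 0" "Pr > 0" "0 \<le> Cx" "Cx < 1" "a \<ge> 0" "b \<ge> 0"
  shows "0 \<le> R_sr Ps Pr Cx a b"
proof -
  have e: "Pr*b*Cx \<le> Pr*b" using assms by (intro mult_left_le) auto
  have e0: "0 \<le> Pr*b*Cx" using assms by simp
  have den: "(Pr*b*Cx)^2 < (Pr*b+1)^2" using e e0 by (intro power_strict_mono) auto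
  have "(Pr*b+1)^2 \<le> (Ps*a+Pr*b+1)^2" using assms by (intro power_mono) auto
  hence q: "1 \<le> ((Ps*a+Pr*b+1)^2 - (Pr*b*Cx)^2) / ((Pr*b+1)^2 - (Pr*b*Cx)^2)"
    using den by (simp add: le_divide_eq)
  hence "0 \<le> log 2 (((Ps*a+Pr*b+1)^2 - (Pr*b*Cx)^2) / ((Pr*b+1)^2 - (Pr*b*Cx)^2))"
    by simp
  thus ?thesis unfolding R_sr_def by (simp add: algebra_simps)
qed

lemma R_rd_nonneg:
  fixes Ps Pr Cx c d :: real
  assumes "Ps > 0" "Pr > 0" "0 \<le> Cx" "Cx < 1" "c \<ge> 0" "d \<ge> 0"
  shows "0 \<le> R_rd Ps Pr Cx c d"
proof -
  define S where "S = Ps*d+1"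
  define v where "v = Pr*c"
  have S: "S > 0" using assms by (simp add: S_def add_nonneg_pos)
  have v: "v \<ge> 0" using assms by (simp add: v_def)
  have "(v * Cx)^2 \<le> v^2" using v assms by (simp add: power_mult_distrib mult_left_le power_le_one)
  moreover have "(v+S)^2 = v^2 + 2 * v * S + S^2" by (simp add: power2_eq_square algebra_simps)
  moreover have "0 \<le> v * S" using v S by simp
  ultimately have "S^2 \<le> (v+S)^2 - (v * Cx)^2" by linarith
  hence "1 \<le> ((v+S)^2 - (v * Cx)^2) / S^2" using S by (simp add: le_divide_eq)
  hence "0 \<le> log 2 (((v+S)^2 - (v * Cx)^2) / S^2)" by simp
  thus ?thesis unfolding R_rd_def S_def v_def by (simp add: algebra_simps)
qed




lemma Gamma_nat: "m \<ge> 1 \<Longrightarrow> Gamma (real m) = fact (m - 1)"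
  using Gamma_fact[of "m - 1", where 'a=real] by (simp add: of_nat_diff)

lemma gamma_erlang: "m \<ge> 1 \<Longrightarrow> \<theta> > 0 \<Longrightarrow> gamma_density m \<theta> = erlang_density (m - 1) (1/\<theta>)"
  by (auto simp: fun_eq_iff gamma_density_def erlang_density_def Gamma_nat power_divide field_simps)

lemma erlang_CDF_tail: "0 \<le> t \<Longrightarrow> 1 - erlang_CDF k l t = (\<Sum>n\<le>k. (l * t)^n * exp (- l * t) / fact n)"
  by (simp add: erlang_CDF_def)

lemma erlang_CDF_le1: "0 < l \<Longrightarrow> erlang_CDF k l t \<le> 1"
  by (cases "t < 0") (auto simp: erlang_CDF_def intro!: sum_nonneg)

lemma erlang_tail:
  assumes l: "0 < l"
  shows "(\<integral>\<^sup>+ x. ennreal (erlang_density k l x) * indicator {t<..} x \<partial>lborel) = ennreal (1 - erlang_CDF k l t)"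
proof -
  have tot: "(\<integral>\<^sup>+ x. ennreal (erlang_density k l x) \<partial>lborel) = 1"
    using nn_integral_erlang_ith_moment[OF l, of k 0] by simp
  have "(\<integral>\<^sup>+ x. ennreal (erlang_density k l x) * indicator {..t} x \<partial>lborel) +
        (\<integral>\<^sup>+ x. ennreal (erlang_density k l x) * indicator {t<..} x \<partial>lborel) =
        (\<integral>\<^sup>+ x. ennreal (erlang_density k l x) * indicator {..t} x + ennreal (erlang_density k l x) * indicator {t<..} x \<partial>lborel)"
    by (rule nn_integral_add[symmetric]) auto
  also have "\<dots> = (\<integral>\<^sup>+ x. ennreal (erlang_density k l x) \<partial>lborel)"
    by (intro nn_integral_cong) (auto split: split_indicator)
  finally have "ennreal (erlang_CDF k l t) + (\<integral>\<^sup>+ x. ennreal (erlang_density k l x) * indicator {t<..} x \<partial>lborel)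
      = ennreal (erlang_CDF k l t) + ennreal (1 - erlang_CDF k l t)"
    using tot nn_integral_erlang_density[OF l, of k t] erlang_CDF_le1[OF l, of k t] erlang_CDF_nonneg[OF l, of k t]
    by (simp add: ennreal_plus[symmetric] del: ennreal_plus)
  thus ?thesis by (simp add: ennreal_add_left_cancel)
qed

lemma upper_Gamma_eq:
  assumes z: "0 \<le> z"
  shows "upper_Gamma (real (Suc k)) z = fact k * (1 - erlang_CDF k 1 z)"
proof -
  have "upper_Gamma (real (Suc k)) z = integral\<^sup>L lborel (\<lambda>t. indicator {z..} t * (t powr real k * exp (- t)))"
    unfolding upper_Gamma_def set_lebesgue_integral_def by simp
  also have "\<dots> = enn2real (\<integral>\<^sup>+ t. ennreal (indicator {z..} t * (t powr real k * exp (- t))) \<partial>lborel)"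
    by (rule integral_eq_nn_integral) auto
  also have "(\<integral>\<^sup>+ t. ennreal (indicator {z..} t * (t powr real k * exp (- t))) \<partial>lborel)
      = (\<integral>\<^sup>+ t. ennreal (fact k) * (ennreal (erlang_density k 1 t) * indicator {z<..} t) \<partial>lborel)"
  proof (intro nn_integral_cong_AE eventually_mono[OF AE_lborel_singleton[of z]])
    fix t :: real assume "t \<noteq> z"
    show "ennreal (indicator {z..} t * (t powr real k * exp (- t))) =
          ennreal (fact k) * (ennreal (erlang_density k 1 t) * indicator {z<..} t)"
    proof (cases "z < t")
      case True
      hence "t > 0" using z by linarith
      thus ?thesis using True by (simp add: erlang_density_def powr_realpow ennreal_mult[symmetric])
    next
      case False
      thus ?thesis using \<open>t \<noteq> z\<close> by (simp add: indicator_def)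
    qed
  qed
  also have "\<dots> = ennreal (fact k) * ennreal (1 - erlang_CDF k 1 z)"
    by (subst nn_integral_cmult) (auto simp: erlang_tail)
  also have "\<dots> = ennreal (fact k * (1 - erlang_CDF k 1 z))"
    by (simp add: ennreal_mult erlang_CDF_le1)
  finally show ?thesis using erlang_CDF_le1[of 1 k z] by simp
qed


lemma prob_gt_pair:
  fixes X Y :: "'a \<Rightarrow> real" and F :: "real \<Rightarrow> real \<Rightarrow> real" and T :: "real \<Rightarrow> real"
  assumes "prob_space M"
    and ind: "prob_space.indep_var M borel X borel Y"
    and X: "distributed M lborel X (\<lambda>x. ennreal (erlang_density k l x))"
    and Y: "distributed M lborel Y (\<lambda>y. ennreal (fY y))"
    and l: "0 < l" and fY0: "\<forall>y<0. fY y = 0"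
    and F[measurable]: "(\<lambda>p. F (fst p) (snd p)) \<in> borel_measurable (lborel \<Otimes>\<^sub>M lborel)"
    and eq: "\<forall>x y. 0 \<le> x \<longrightarrow> 0 \<le> y \<longrightarrow> (r < F x y \<longleftrightarrow> T y < x)"
  shows "emeasure M {\<omega>\<in>space M. r < F (X \<omega>) (Y \<omega>)} =
         (\<integral>\<^sup>+ y. ennreal (fY y) * ennreal (1 - erlang_CDF k l (T y)) \<partial>lborel)"
proof -
  interpret prob_space M by fact
  have ind': "indep_var lborel X lborel Y"
    using indep_var_compose[OF ind, of id lborel id lborel] by simp
  have J: "distributed M (lborel \<Otimes>\<^sub>M lborel) (\<lambda>\<omega>. (X \<omega>, Y \<omega>))
      (\<lambda>(x,y). ennreal (erlang_density k l x) * ennreal (fY y))"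
    by (rule distributed_joint_indep[OF lborel.sigma_finite_measure_axioms lborel.sigma_finite_measure_axioms X Y ind'])
  note Jm = distributed_borel_measurable[OF J]
  define S where "S = {p\<in>space (lborel \<Otimes>\<^sub>M lborel). r < F (fst p) (snd p)}"
  have Ssets: "S \<in> sets (lborel \<Otimes>\<^sub>M lborel)" unfolding S_def by measurable
  have "{\<omega>\<in>space M. r < F (X \<omega>) (Y \<omega>)} = (\<lambda>\<omega>. (X \<omega>, Y \<omega>)) -` S \<inter> space M"
    by (auto simp: S_def space_pair_measure)
  hence "emeasure M {\<omega>\<in>space M. r < F (X \<omega>) (Y \<omega>)} =
     (\<integral>\<^sup>+ p. (\<lambda>(x,y). ennreal (erlang_density k l x) * ennreal (fY y)) p * indicator S p \<partial>(lborel \<Otimes>\<^sub>M lborel))"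
    using distributed_emeasure[OF J Ssets] by simp
  also have "\<dots> = (\<integral>\<^sup>+ y. (\<integral>\<^sup>+ x. (\<lambda>(x,y). ennreal (erlang_density k l x) * ennreal (fY y)) (x,y) * indicator S (x,y) \<partial>lborel) \<partial>lborel)"
    by (rule lborel_pair.nn_integral_snd[symmetric]) (use Jm Ssets in measurable)
  also have "\<dots> = (\<integral>\<^sup>+ y. ennreal (fY y) * ennreal (1 - erlang_CDF k l (T y)) \<partial>lborel)"
  proof (rule nn_integral_cong)
    fix y :: real
    show "(\<integral>\<^sup>+ x. (\<lambda>(x,y). ennreal (erlang_density k l x) * ennreal (fY y)) (x,y) * indicator S (x,y) \<partial>lborel)
       = ennreal (fY y) * ennreal (1 - erlang_CDF k l (T y))"
    proof (cases "y < 0")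
      case True thus ?thesis using fY0 by simp
    next
      case False
      have "(\<integral>\<^sup>+ x. (\<lambda>(x,y). ennreal (erlang_density k l x) * ennreal (fY y)) (x,y) * indicator S (x,y) \<partial>lborel)
          = (\<integral>\<^sup>+ x. ennreal (fY y) * (ennreal (erlang_density k l x) * indicator {T y<..} x) \<partial>lborel)"
      proof (rule nn_integral_cong)
        fix x :: real
        show "(\<lambda>(x,y). ennreal (erlang_density k l x) * ennreal (fY y)) (x,y) * indicator S (x,y)
            = ennreal (fY y) * (ennreal (erlang_density k l x) * indicator {T y<..} x)"
        proof (cases "x < 0")
          case True thus ?thesis by (simp add: erlang_density_def)
        next
          case False2: False
          have "(x,y) \<in> S \<longleftrightarrow> x \<in> {T y<..}" using eq False False2 by (auto simp: S_def space_pair_measure)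
          thus ?thesis by (simp add: indicator_def mult.commute)
        qed
      qed
      also have "\<dots> = ennreal (fY y) * ennreal (1 - erlang_CDF k l (T y))"
        by (subst nn_integral_cmult) (auto simp: erlang_tail[OF l])
      finally show ?thesis .
    qed
  qed
  finally show ?thesis .
qed




lemma E5:
  fixes \<beta> \<theta> Ps d :: real
  assumes "\<theta> > 0" "md \<ge> 1" "d \<ge> 0" "L = Ps*\<beta> + 1/\<theta>" "L > 0"
  shows "erlang_density (md-1) (1/\<theta>) d * exp (-(\<beta>*(Ps*d+1))) =
         exp (-\<beta>) * erlang_density (md-1) L d / (\<theta>^md * L^md)"
proof -
  have e: "exp (-(1/\<theta>)*d) * exp (-(\<beta>*(Ps*d+1))) = exp (-\<beta>) * exp (-L*d)"
    by (simp only: exp_add[symmetric]) (simp add: assms(4) algebra_simps)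
  have s: "Suc (md - 1) = md" using assms by simp
  have "erlang_density (md-1) (1/\<theta>) d * exp (-(\<beta>*(Ps*d+1))) =
        (1/\<theta>)^md * d^(md-1) * (exp (-(1/\<theta>)*d) * exp (-(\<beta>*(Ps*d+1)))) / fact (md-1)"
    using assms by (simp add: erlang_density_def s)
  also have "\<dots> = (1/\<theta>)^md * d^(md-1) * (exp (-\<beta>) * exp (-L*d)) / fact (md-1)" by (simp only: e)
  also have "\<dots> = exp (-\<beta>) * erlang_density (md-1) L d / (\<theta>^md * L^md)"
    using assms by (simp add: erlang_density_def s field_simps)
  finally show ?thesis .
qed

lemma Q_pointwise:
  fixes \<beta> \<theta>d \<theta>r Ps d :: real and T :: "real \<Rightarrow> real"
  assumes "\<beta> \<ge> 0" "\<theta>d > 0" "\<theta>r > 0" "Ps > 0" "md \<ge> 1" "mr \<ge> 1"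
    and TB: "\<And>d. d \<ge> 0 \<Longrightarrow> T d = \<theta>r * (\<beta>*(Ps*d+1))"
    and L: "L = Ps*\<beta> + 1/\<theta>d"
  shows "erlang_density (md-1) (1/\<theta>d) d * (1 - erlang_CDF (mr-1) (1/\<theta>r) (T d)) =
    (\<Sum>n<mr. \<Sum>k\<le>n. real (n choose k) * Ps^k * \<beta>^n * exp (-\<beta>) / (fact n * \<theta>d^md * L^md)
        * (erlang_density (md-1) L d * d^k))"
proof (cases "d < 0")
  case True thus ?thesis by (simp add: erlang_density_def)
next
  case False
  hence d: "d \<ge> 0" by simp
  have Lp: "L > 0" using assms by (simp add: add_nonneg_pos)
  have Td: "(1/\<theta>r) * T d = \<beta>*(Ps*d+1)" using TB[OF d] assms by simp
  have T0: "T d \<ge> 0" using TB[OF d] assms d by simp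
  have mr: "{..mr - Suc 0} = {..<mr}" using assms by auto
  have Td': "T d / \<theta>r = \<beta>*(Ps*d+1)" using Td by simp
  have tl: "1 - erlang_CDF (mr-1) (1/\<theta>r) (T d) = (\<Sum>n<mr. (\<beta>*(Ps*d+1))^n * exp (-(\<beta>*(Ps*d+1))) / fact n)"
    using erlang_CDF_tail[OF T0, of "mr-1" "1/\<theta>r"] by (simp add: Td' mr)
  have "erlang_density (md-1) (1/\<theta>d) d * (1 - erlang_CDF (mr-1) (1/\<theta>r) (T d)) =
     erlang_density (md-1) (1/\<theta>d) d * (\<Sum>n<mr. (\<beta>*(Ps*d+1))^n * exp (-(\<beta>*(Ps*d+1))) / fact n)"
    by (simp only: tl)
  also have "\<dots> = (\<Sum>n<mr. (\<beta>*(Ps*d+1))^n / fact n * (erlang_density (md-1) (1/\<theta>d) d * exp (-(\<beta>*(Ps*d+1)))))"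
    by (simp only: sum_distrib_left) (rule sum.cong, simp_all)
  also have "\<dots> = (\<Sum>n<mr. (\<beta>*(Ps*d+1))^n / fact n * (exp (-\<beta>) * erlang_density (md-1) L d / (\<theta>d^md * L^md)))"
    using E5[OF assms(2) assms(5) d L Lp] by simp
  also have "\<dots> = (\<Sum>n<mr. \<Sum>k\<le>n. real (n choose k) * Ps^k * \<beta>^n * exp (-\<beta>) / (fact n * \<theta>d^md * L^md)
        * (erlang_density (md-1) L d * d^k))"
  proof (rule sum.cong[OF refl])
    fix n
    have b: "(\<beta>*(Ps*d+1))^n = \<beta>^n * (\<Sum>k\<le>n. real (n choose k) * (Ps*d)^k)"
      using binomial_ring[of "Ps*d" 1 n] by (simp add: power_mult_distrib atLeast0AtMost)
    show "(\<beta>*(Ps*d+1))^n / fact n * (exp (-\<beta>) * erlang_density (md-1) L d / (\<theta>d^md * L^md)) =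
      (\<Sum>k\<le>n. real (n choose k) * Ps^k * \<beta>^n * exp (-\<beta>) / (fact n * \<theta>d^md * L^md)
        * (erlang_density (md-1) L d * d^k))"
      unfolding b by (simp add: sum_distrib_left sum_distrib_right sum_divide_distrib power_mult_distrib algebra_simps)
  qed
  finally show ?thesis .
qed


lemma erl_pow_nonneg: "0 < L \<Longrightarrow> 0 \<le> erlang_density k L d * d^i"
  by (cases "d < 0") (auto simp: erlang_density_def)

lemma Q_integral:
  fixes \<beta> \<theta>d \<theta>r Ps :: real and T :: "real \<Rightarrow> real"
  assumes "\<beta> \<ge> 0" "\<theta>d > 0" "\<theta>r > 0" "Ps > 0" "md \<ge> 1" "mr \<ge> 1"
    and TB: "\<And>d. d \<ge> 0 \<Longrightarrow> T d = \<theta>r * (\<beta>*(Ps*d+1))"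
    and L: "L = Ps*\<beta> + 1/\<theta>d"
  shows "(\<integral>\<^sup>+ d. ennreal (erlang_density (md-1) (1/\<theta>d) d) * ennreal (1 - erlang_CDF (mr-1) (1/\<theta>r) (T d)) \<partial>lborel) =
    ennreal (\<Sum>n<mr. \<Sum>k\<le>n. real (n choose k) * Ps^k * \<beta>^n * exp (-\<beta>) / (fact n * \<theta>d^md * L^md)
        * (fact (md - 1 + k) / (fact (md - 1) * L^k)))"
proof -
  have Lp: "L > 0" using assms by (simp add: add_nonneg_pos)
  define c where "c n k = real (n choose k) * Ps^k * \<beta>^n * exp (-\<beta>) / (fact n * \<theta>d^md * L^md)" for n k :: nat
  have c0: "c n k \<ge> 0" for n k using assms Lp unfolding c_def by simp
  have "(\<integral>\<^sup>+ d. ennreal (erlang_density (md-1) (1/\<theta>d) d) * ennreal (1 - erlang_CDF (mr-1) (1/\<theta>r) (T d)) \<partial>lborel)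
     = (\<integral>\<^sup>+ d. (\<Sum>n<mr. \<Sum>k\<le>n. ennreal (c n k * (erlang_density (md-1) L d * d^k))) \<partial>lborel)"
  proof (rule nn_integral_cong)
    fix d :: real
    have "ennreal (erlang_density (md-1) (1/\<theta>d) d) * ennreal (1 - erlang_CDF (mr-1) (1/\<theta>r) (T d))
        = ennreal (erlang_density (md-1) (1/\<theta>d) d * (1 - erlang_CDF (mr-1) (1/\<theta>r) (T d)))"
      using assms erlang_CDF_le1[of "1/\<theta>r" "mr-1" "T d"] by (simp add: ennreal_mult)
    also have "\<dots> = ennreal (\<Sum>n<mr. \<Sum>k\<le>n. c n k * (erlang_density (md-1) L d * d^k))"
      unfolding c_def by (subst Q_pointwise[OF assms]) simp_all
    also have "\<dots> = (\<Sum>n<mr. \<Sum>k\<le>n. ennreal (c n k * (erlang_density (md-1) L d * d^k)))"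
      using c0 erl_pow_nonneg[OF Lp] by (simp add: sum_nonneg)
    finally show "ennreal (erlang_density (md-1) (1/\<theta>d) d) * ennreal (1 - erlang_CDF (mr-1) (1/\<theta>r) (T d))
        = (\<Sum>n<mr. \<Sum>k\<le>n. ennreal (c n k * (erlang_density (md-1) L d * d^k)))" .
  qed
  also have "\<dots> = (\<Sum>n<mr. \<Sum>k\<le>n. (\<integral>\<^sup>+ d. ennreal (c n k * (erlang_density (md-1) L d * d^k)) \<partial>lborel))"
    by (simp add: nn_integral_sum)
  also have "\<dots> = (\<Sum>n<mr. \<Sum>k\<le>n. ennreal (c n k * (fact (md - 1 + k) / (fact (md - 1) * L^k))))"
  proof (intro sum.cong refl)
    fix n k
    have "(\<integral>\<^sup>+ d. ennreal (c n k * (erlang_density (md-1) L d * d^k)) \<partial>lborel)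
        = (\<integral>\<^sup>+ d. ennreal (c n k) * ennreal (erlang_density (md-1) L d * d^k) \<partial>lborel)"
      using c0 erl_pow_nonneg[OF Lp] by (intro nn_integral_cong) (simp add: ennreal_mult)
    also have "\<dots> = ennreal (c n k) * ennreal (fact (md - 1 + k) / (fact (md - 1) * L^k))"
      by (subst nn_integral_cmult) (simp_all add: nn_integral_erlang_ith_moment[OF Lp])
    also have "\<dots> = ennreal (c n k * (fact (md - 1 + k) / (fact (md - 1) * L^k)))"
      by (rule ennreal_mult[symmetric]) (use c0 Lp in auto)
    finally show "(\<integral>\<^sup>+ d. ennreal (c n k * (erlang_density (md-1) L d * d^k)) \<partial>lborel)
        = ennreal (c n k * (fact (md - 1 + k) / (fact (md - 1) * L^k)))" .
  qed
  also have "\<dots> = ennreal (\<Sum>n<mr. \<Sum>k\<le>n. c n k * (fact (md - 1 + k) / (fact (md - 1) * L^k)))"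
    using c0 Lp by (simp add: sum_nonneg)
  finally show ?thesis unfolding c_def .
qed




lemma layer_cake:
  fixes Z :: "'a \<Rightarrow> real"
  assumes "prob_space M" and Zm[measurable]: "Z \<in> borel_measurable M" and Z0: "AE \<omega> in M. 0 \<le> Z \<omega>"
    and G: "\<And>r. r > 0 \<Longrightarrow> measure M {\<omega>\<in>space M. r < Z \<omega>} = G r"
  shows "integral\<^sup>L M Z = (LBINT r:{0<..}. G r)"
proof -
  interpret P: prob_space M by fact
  interpret PP: pair_sigma_finite M lborel ..
  define PZ where "PZ r = measure M {\<omega>\<in>space M. r < Z \<omega>}" for r
  have mono: "mono (\<lambda>r. - PZ r)"
  proof (rule monoI)
    fix r1 r2 :: real assume "r1 \<le> r2"
    hence "PZ r2 \<le> PZ r1" unfolding PZ_def by (intro P.finite_measure_mono) auto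
    thus "- PZ r1 \<le> - PZ r2" by simp
  qed
  have PZm: "PZ \<in> borel_measurable borel"
  proof -
    have "(\<lambda>r. - (- PZ r)) \<in> borel_measurable borel"
      using borel_measurable_mono[OF mono] by measurable
    thus ?thesis by simp
  qed
  define S where "S = {p\<in>space (M \<Otimes>\<^sub>M lborel). 0 < snd p \<and> snd p < Z (fst p)}"
  have Ssets[measurable]: "S \<in> sets (M \<Otimes>\<^sub>M lborel)" unfolding S_def by measurable
  have "integral\<^sup>L M Z = enn2real (\<integral>\<^sup>+ \<omega>. ennreal (Z \<omega>) \<partial>M)"
    by (rule integral_eq_nn_integral) (use Z0 in auto)
  also have "(\<integral>\<^sup>+ \<omega>. ennreal (Z \<omega>) \<partial>M) = (\<integral>\<^sup>+ \<omega>. (\<integral>\<^sup>+ r. indicator S (\<omega>, r) \<partial>lborel) \<partial>M)"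
  proof (rule nn_integral_cong)
    fix \<omega> assume \<omega>: "\<omega> \<in> space M"
    have "(\<integral>\<^sup>+ r. indicator S (\<omega>, r) \<partial>lborel) = (\<integral>\<^sup>+ r. indicator {0<..<Z \<omega>} r \<partial>lborel)"
      using \<omega> by (intro nn_integral_cong) (auto simp: S_def space_pair_measure indicator_def)
    also have "\<dots> = emeasure lborel {0<..<Z \<omega>}" by simp
    also have "\<dots> = ennreal (Z \<omega>)"
      by (cases "0 \<le> Z \<omega>") (auto simp: ennreal_neg)
    finally show "ennreal (Z \<omega>) = (\<integral>\<^sup>+ r. indicator S (\<omega>, r) \<partial>lborel)" by simp
  qed
  also have "\<dots> = (\<integral>\<^sup>+ r. (\<integral>\<^sup>+ \<omega>. indicator S (\<omega>, r) \<partial>M) \<partial>lborel)"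
    by (rule PP.Fubini'[symmetric]) measurable
  also have "\<dots> = (\<integral>\<^sup>+ r. ennreal (indicator {0<..} r * PZ r) \<partial>lborel)"
  proof (rule nn_integral_cong)
    fix r :: real
    have "(\<integral>\<^sup>+ \<omega>. indicator S (\<omega>, r) \<partial>M) = (\<integral>\<^sup>+ \<omega>. indicator {0<..} r * indicator {\<omega>\<in>space M. r < Z \<omega>} \<omega> \<partial>M)"
      by (intro nn_integral_cong) (auto simp: S_def space_pair_measure indicator_def)
    also have "\<dots> = indicator {0<..} r * emeasure M {\<omega>\<in>space M. r < Z \<omega>}"
      by (rule nn_integral_cmult_indicator) measurable
    also have "\<dots> = ennreal (indicator {0<..} r * PZ r)"
      by (simp add: PZ_def P.emeasure_eq_measure indicator_def)
    finally show "(\<integral>\<^sup>+ \<omega>. indicator S (\<omega>, r) \<partial>M) = ennreal (indicator {0<..} r * PZ r)" .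
  qed
  also have "enn2real \<dots> = integral\<^sup>L lborel (\<lambda>r. indicator {0<..} r * PZ r)"
    by (rule integral_eq_nn_integral[symmetric]) (use PZm in \<open>auto simp: PZ_def\<close>)
  also have "\<dots> = (LBINT r:{0<..}. PZ r)"
    by (simp add: set_lebesgue_integral_def)
  also have "\<dots> = (LBINT r:{0<..}. G r)"
    by (rule set_lebesgue_integral_cong) (auto simp: PZ_def G)
  finally show ?thesis .
qed


lemma term_eq:
  fixes C Ps \<beta> x \<theta>sd \<theta>rr L U E1 E2 fA fn fD fR fS :: real
  assumes "fS \<noteq> 0" "fn \<noteq> 0" "fD \<noteq> 0" "fR \<noteq> 0" "\<theta>sd \<noteq> 0" "\<theta>rr \<noteq> 0" "L \<noteq> 0"
  shows "C*Ps^k*fA/fn * (x^a * (fS*U) * \<beta>^n * (E1*E2)) / (fD*fR*fS*\<theta>sd^msd*\<theta>rr^mrr*L^(k+msd))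
     = (C*Ps^k*\<beta>^n*E1/(fn*\<theta>sd^msd*L^msd) * (fA/(fD*L^k))) * (x^a*E2/(fR*\<theta>rr^mrr) * U)"
  using assms by (simp add: field_simps power_add)

lemma Psi_nonneg: "0 \<le> r \<Longrightarrow> 0 \<le> c \<Longrightarrow> c < 1 \<Longrightarrow> 0 \<le> Psi r c"
proof -
  assume a: "0 \<le> r" "0 \<le> c" "c < 1"
  have "1 \<le> (2::real) powr (2*r)" using a by (intro ge_one_powr_ge_zero) auto
  moreover have "c^2 \<le> 1" using a by (simp add: power_le_one)
  ultimately have "1 \<le> 1 + (2 powr (2*r) - 1) * (1 - c^2)" by simp
  thus ?thesis unfolding Psi_def by simp
qed

theorem theorem6:
  fixes M :: "'a measure" and g :: "link \<Rightarrow> 'a \<Rightarrow> real"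
    and m :: "link \<Rightarrow> nat" and \<pi> \<theta> :: "link \<Rightarrow> real"
    and Ps Pr Cx :: real
  assumes "prob_space M"
    and "Ps > 0" and "Pr > 0" and "0 \<le> Cx" and "Cx < 1"
    and "\<And>l. m l \<ge> 1" and "\<And>l. \<pi> l > 0" and "\<And>l. \<theta> l = \<pi> l / real (m l)"
    and "prob_space.indep_vars M (\<lambda>_. borel) g UNIV"
    and "\<And>l. distributed M lborel (g l) (\<lambda>x. ennreal (gamma_density (m l) (\<theta> l) x))"
  shows "prob_space.expectation M
           (\<lambda>\<omega>. min (R_sr Ps Pr Cx (g SR \<omega>) (g RR \<omega>)) (R_rd Ps Pr Cx (g RD \<omega>) (g SD \<omega>)))
       = (LBINT r:{0<..}. LBINT x:{0<..}.
            (let \<beta> = Psi r Cx / (Pr * \<theta> RD * (1 - Cx\<^sup>2)) in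
             \<Sum>n<m RD. \<Sum>k\<le>n.
               real (n choose k) * Ps ^ k * Gamma (real (k + m SD)) / Gamma (real n + 1) *
               (x ^ (m RR - 1) *
                upper_Gamma (real (m SR))
                  ((Pr * x + 1) / (Ps * \<theta> SR) * Psi r (Pr * x * Cx / (Pr * x + 1))) *
                \<beta> ^ n * exp (- (\<beta> + x / \<theta> RR)))
               / (Gamma (real (m SD)) * Gamma (real (m RR)) * Gamma (real (m SR)) *
                  \<theta> SD ^ m SD * \<theta> RR ^ m RR * (Ps * \<beta> + 1 / \<theta> SD) ^ (k + m SD))))"
proof -
  interpret P: prob_space M by fact
  note ind = assms(9)
  have thp: "\<theta> l > 0" for l using assms(6,7,8)[of l] by simp
  have Gp: "Gamma (real (m l)) > 0" for l using Gamma_nat[of "m l"] assms(6)[of l] by simp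
  have Dl: "distributed M lborel (g l) (\<lambda>x. ennreal (erlang_density (m l - 1) (1/\<theta> l) x))" for l
    using assms(10)[of l] gamma_erlang[OF assms(6) thp] by simp
  have gm[measurable]: "g l \<in> borel_measurable M" for l using distributed_measurable[OF Dl[of l]] by simp
  have pair: "P.indep_var borel (g a) borel (g b)" if ab: "a \<noteq> b" for a b
  proof -
    have "P.indep_var borel ((\<lambda>f. f a) \<circ> (\<lambda>\<omega>. restrict (\<lambda>i. g i \<omega>) {a})) borel ((\<lambda>f. f b) \<circ> (\<lambda>\<omega>. restrict (\<lambda>i. g i \<omega>) {b}))"
      using ab by (intro P.indep_var_compose[OF P.indep_var_restrict[OF ind]]) auto
    thus ?thesis by (simp add: comp_def)
  qed
  define A where "A \<omega> = R_sr Ps Pr Cx (g SR \<omega>) (g RR \<omega>)" for \<omega>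
  define B where "B \<omega> = R_rd Ps Pr Cx (g RD \<omega>) (g SD \<omega>)" for \<omega>
  define Z where "Z \<omega> = min (A \<omega>) (B \<omega>)" for \<omega>
  have Am[measurable]: "A \<in> borel_measurable M" unfolding A_def R_sr_def by measurable
  have Bm[measurable]: "B \<in> borel_measurable M" unfolding B_def R_rd_def by measurable
  have Zm[measurable]: "Z \<in> borel_measurable M" unfolding Z_def by measurable
  have AB: "P.indep_var borel A borel B"
  proof -
    have "P.indep_var borel ((\<lambda>f. R_sr Ps Pr Cx (f SR) (f RR)) \<circ> (\<lambda>\<omega>. restrict (\<lambda>i. g i \<omega>) {SR,RR}))
                      borel ((\<lambda>f. R_rd Ps Pr Cx (f RD) (f SD)) \<circ> (\<lambda>\<omega>. restrict (\<lambda>i. g i \<omega>) {RD,SD}))"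
      by (intro P.indep_var_compose[OF P.indep_var_restrict[OF ind]]) (auto simp: R_sr_def R_rd_def)
    moreover have "A = (\<lambda>\<omega>. R_sr Ps Pr Cx (g SR \<omega>) (g RR \<omega>))" "B = (\<lambda>\<omega>. R_rd Ps Pr Cx (g RD \<omega>) (g SD \<omega>))"
      by (auto simp: A_def B_def)
    ultimately show ?thesis by (simp add: comp_def)
  qed
  have gnn: "AE \<omega> in M. 0 \<le> g l \<omega>" for l
  proof -
    have "AE x in distr M lborel (g l). 0 \<le> x"
      unfolding distributed_distr_eq_density[OF Dl[of l]]
      by (subst AE_density) (auto simp: erlang_density_def)
    thus ?thesis by (rule AE_distrD[rotated]) simp
  qed
  have Z0: "AE \<omega> in M. 0 \<le> Z \<omega>"
    using gnn[of SR] gnn[of RR] gnn[of RD] gnn[of SD]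
    by eventually_elim (use assms in \<open>auto simp: Z_def A_def B_def intro: R_sr_nonneg R_rd_nonneg\<close>)
  show ?thesis
    unfolding Z_def[symmetric, unfolded A_def B_def]
  proof (rule layer_cake[OF assms(1) Zm Z0])
    fix r :: real assume r: "r > 0"
    define \<beta> where "\<beta> = Psi r Cx / (Pr * \<theta> RD * (1 - Cx\<^sup>2))"
    define L where "L = Ps * \<beta> + 1 / \<theta> SD"
    define zA where "zA x = (Pr * x + 1) / (Ps * \<theta> SR) * Psi r (Pr * x * Cx / (Pr * x + 1))" for x
    define h where "h x = gamma_density (m RR) (\<theta> RR) x * (1 - erlang_CDF (m SR - 1) 1 (zA x))" for x
    define Q where "Q = (\<Sum>n<m RD. \<Sum>k\<le>n. real (n choose k) * Ps^k * \<beta>^n * exp (-\<beta>) / (fact n * \<theta> SD^m SD * L^m SD)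
        * (fact (m SD - 1 + k) / (fact (m SD - 1) * L^k)))"
    have C1: "1 - Cx^2 > 0" using assms(4,5) by (simp add: power_less_one_iff abs_square_less_1)
    have Psi0: "0 \<le> Psi r Cx" using Psi_nonneg[of r Cx] r assms by simp
    have \<beta>0: "\<beta> \<ge> 0" unfolding \<beta>_def using Psi0 C1 thp[of RD] assms(3) by simp
    have Lp: "L > 0" unfolding L_def using \<beta>0 thp[of SD] assms(2) by (simp add: add_nonneg_pos)
    have Q0: "Q \<ge> 0" unfolding Q_def using \<beta>0 Lp thp[of SD] assms(2)
      by (intro sum_nonneg mult_nonneg_nonneg divide_nonneg_nonneg) auto
    have ind_split: "measure M {\<omega>\<in>space M. r < Z \<omega>} = measure M {\<omega>\<in>space M. r < A \<omega>} * measure M {\<omega>\<in>space M. r < B \<omega>}"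
      using P.prob_indep_random_variable[OF AB, of "{r<..}" "{r<..}"] by (simp add: Z_def)
    have "emeasure M {\<omega>\<in>space M. r < B \<omega>} = (\<integral>\<^sup>+ d. ennreal (erlang_density (m SD - 1) (1/\<theta> SD) d) *
        ennreal (1 - erlang_CDF (m RD - 1) (1/\<theta> RD) ((Ps*d+1) * Psi r Cx / (Pr*(1-Cx^2)))) \<partial>lborel)"
      unfolding B_def
    proof (rule prob_gt_pair[OF assms(1) pair Dl Dl])
      show "RD \<noteq> SD" by simp
      show "0 < 1 / \<theta> RD" using thp by simp
      show "\<forall>y<0. erlang_density (m SD - 1) (1 / \<theta> SD) y = 0" by (simp add: erlang_density_def)
      show "(\<lambda>p. R_rd Ps Pr Cx (fst p) (snd p)) \<in> borel_measurable (lborel \<Otimes>\<^sub>M lborel)"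
        unfolding R_rd_def by measurable
      show "\<forall>x y. 0 \<le> x \<longrightarrow> 0 \<le> y \<longrightarrow> (r < R_rd Ps Pr Cx x y \<longleftrightarrow> (Ps*y+1) * Psi r Cx / (Pr*(1-Cx^2)) < x)"
        using LB assms(2-5) r by auto
    qed
    also have "\<dots> = ennreal Q" unfolding Q_def
    proof (rule Q_integral)
      show "\<beta> \<ge> 0" by fact
      show "\<theta> SD > 0" "\<theta> RD > 0" "Ps > 0" "1 \<le> m SD" "1 \<le> m RD" using thp assms by auto
      show "L = Ps * \<beta> + 1 / \<theta> SD" by (simp add: L_def)
      fix d :: real
      show "(Ps*d+1) * Psi r Cx / (Pr*(1-Cx^2)) = \<theta> RD * (\<beta>*(Ps*d+1))"
        unfolding \<beta>_def using thp[of RD] C1 assms(3) by (simp add: field_simps)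
    qed
    finally have PB: "measure M {\<omega>\<in>space M. r < B \<omega>} = Q"
      using Q0 by (simp add: measure_def)
    have hm: "h \<in> borel_measurable borel"
      unfolding h_def gamma_density_def erlang_CDF_def zA_def Psi_def by measurable
    have h0: "h x \<ge> 0" for x
      unfolding h_def using thp[of RR] Gp[of RR] erlang_CDF_le1[of 1 "m SR - 1" "zA x"]
      by (intro mult_nonneg_nonneg) (auto simp: gamma_density_def)
    have "emeasure M {\<omega>\<in>space M. r < A \<omega>} = (\<integral>\<^sup>+ y. ennreal (erlang_density (m RR - 1) (1/\<theta> RR) y) *
        ennreal (1 - erlang_CDF (m SR - 1) (1/\<theta> SR) ((Pr*y+1) * Psi r (Pr*y*Cx/(Pr*y+1)) / Ps)) \<partial>lborel)"
      unfolding A_def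
    proof (rule prob_gt_pair[OF assms(1) pair Dl Dl])
      show "SR \<noteq> RR" by simp
      show "0 < 1 / \<theta> SR" using thp by simp
      show "\<forall>y<0. erlang_density (m RR - 1) (1 / \<theta> RR) y = 0" by (simp add: erlang_density_def)
      show "(\<lambda>p. R_sr Ps Pr Cx (fst p) (snd p)) \<in> borel_measurable (lborel \<Otimes>\<^sub>M lborel)"
        unfolding R_sr_def by measurable
      show "\<forall>x y. 0 \<le> x \<longrightarrow> 0 \<le> y \<longrightarrow> (r < R_sr Ps Pr Cx x y \<longleftrightarrow> (Pr*y+1) * Psi r (Pr*y*Cx/(Pr*y+1)) / Ps < x)"
        using LA assms(2-5) r by (auto simp: pos_divide_less_eq mult.commute)
    qed
    also have "\<dots> = (\<integral>\<^sup>+ y. ennreal (indicator {0<..} y * h y) \<partial>lborel)"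
    proof (intro nn_integral_cong_AE eventually_mono[OF AE_lborel_singleton[of 0]])
      fix y :: real assume y0: "y \<noteq> 0"
      show "ennreal (erlang_density (m RR - 1) (1/\<theta> RR) y) *
        ennreal (1 - erlang_CDF (m SR - 1) (1/\<theta> SR) ((Pr*y+1) * Psi r (Pr*y*Cx/(Pr*y+1)) / Ps))
        = ennreal (indicator {0<..} y * h y)"
      proof (cases "y < 0")
        case True thus ?thesis by (simp add: erlang_density_def)
      next
        case False
        hence yp: "y > 0" using y0 by simp
        have "erlang_CDF (m SR - 1) (1/\<theta> SR) ((Pr*y+1) * Psi r (Pr*y*Cx/(Pr*y+1)) / Ps)
            = erlang_CDF (m SR - 1) 1 (1/\<theta> SR * ((Pr*y+1) * Psi r (Pr*y*Cx/(Pr*y+1)) / Ps))"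
          using thp[of SR] by (intro erlang_CDF_transform) simp
        also have "1/\<theta> SR * ((Pr*y+1) * Psi r (Pr*y*Cx/(Pr*y+1)) / Ps) = zA y"
          unfolding zA_def by (simp add: field_simps)
        finally have cdf: "erlang_CDF (m SR - 1) (1/\<theta> SR) ((Pr*y+1) * Psi r (Pr*y*Cx/(Pr*y+1)) / Ps)
            = erlang_CDF (m SR - 1) 1 (zA y)" .
        have gd: "erlang_density (m RR - 1) (1/\<theta> RR) y = gamma_density (m RR) (\<theta> RR) y"
          using gamma_erlang[OF assms(6) thp, of RR] by simp
        have n1: "0 \<le> gamma_density (m RR) (\<theta> RR) y" using thp[of RR] Gp[of RR] yp by (simp add: gamma_density_def)
        have n2: "0 \<le> 1 - erlang_CDF (m SR - 1) 1 (zA y)" using erlang_CDF_le1[of 1] by simp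
        have "ennreal (gamma_density (m RR) (\<theta> RR) y) * ennreal (1 - erlang_CDF (m SR - 1) 1 (zA y))
            = ennreal (gamma_density (m RR) (\<theta> RR) y * (1 - erlang_CDF (m SR - 1) 1 (zA y)))"
          by (rule ennreal_mult[symmetric, OF n1 n2])
        thus ?thesis unfolding cdf gd using yp by (simp add: h_def)
      qed
    qed
    finally have PA: "measure M {\<omega>\<in>space M. r < A \<omega>} = (LBINT x:{0<..}. h x)"
    proof -
      assume e: "emeasure M {\<omega>\<in>space M. r < A \<omega>} = (\<integral>\<^sup>+ y. ennreal (indicator {0<..} y * h y) \<partial>lborel)"
      have "(LBINT x:{0<..}. h x) = integral\<^sup>L lborel (\<lambda>x. indicator {0<..} x * h x)"
        by (simp add: set_lebesgue_integral_def)
      also have "\<dots> = enn2real (\<integral>\<^sup>+ y. ennreal (indicator {0<..} y * h y) \<partial>lborel)"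
        by (rule integral_eq_nn_integral) (use hm h0 in auto)
      finally show ?thesis using e by (simp add: measure_def)
    qed
    have "(LBINT x:{0<..}.
            (let \<beta> = Psi r Cx / (Pr * \<theta> RD * (1 - Cx\<^sup>2)) in
             \<Sum>n<m RD. \<Sum>k\<le>n.
               real (n choose k) * Ps ^ k * Gamma (real (k + m SD)) / Gamma (real n + 1) *
               (x ^ (m RR - 1) *
                upper_Gamma (real (m SR))
                  ((Pr * x + 1) / (Ps * \<theta> SR) * Psi r (Pr * x * Cx / (Pr * x + 1))) *
                \<beta> ^ n * exp (- (\<beta> + x / \<theta> RR)))
               / (Gamma (real (m SD)) * Gamma (real (m RR)) * Gamma (real (m SR)) *
                  \<theta> SD ^ m SD * \<theta> RR ^ m RR * (Ps * \<beta> + 1 / \<theta> SD) ^ (k + m SD))))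
        = (LBINT x:{0<..}. Q * h x)"
    proof (rule set_lebesgue_integral_cong)
      show "{0::real<..} \<in> sets lborel" by simp
      show "\<forall>x. x \<in> {0<..} \<longrightarrow> (let \<beta> = Psi r Cx / (Pr * \<theta> RD * (1 - Cx\<^sup>2)) in
             \<Sum>n<m RD. \<Sum>k\<le>n.
               real (n choose k) * Ps ^ k * Gamma (real (k + m SD)) / Gamma (real n + 1) *
               (x ^ (m RR - 1) *
                upper_Gamma (real (m SR))
                  ((Pr * x + 1) / (Ps * \<theta> SR) * Psi r (Pr * x * Cx / (Pr * x + 1))) *
                \<beta> ^ n * exp (- (\<beta> + x / \<theta> RR)))
               / (Gamma (real (m SD)) * Gamma (real (m RR)) * Gamma (real (m SR)) *
                  \<theta> SD ^ m SD * \<theta> RR ^ m RR * (Ps * \<beta> + 1 / \<theta> SD) ^ (k + m SD))) = Q * h x"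
      proof (intro allI impI)
        fix x :: real assume "x \<in> {0<..}"
        hence xp: "x > 0" by simp
        have c0: "0 \<le> Pr * x * Cx / (Pr * x + 1)" using xp assms by simp
        have c1: "Pr * x * Cx / (Pr * x + 1) < 1"
        proof -
          have "Pr * x * Cx \<le> Pr * x" using xp assms by (intro mult_left_le) auto
          hence lt: "Pr * x * Cx < Pr * x + 1" by linarith
          have pos: "0 < Pr * x + 1" using xp assms by (simp add: add_nonneg_pos)
          show ?thesis using lt pos by (subst divide_less_eq_1_pos) auto
        qed
        have ps: "0 \<le> Psi r (Pr * x * Cx / (Pr * x + 1))" using Psi_nonneg[OF _ c0 c1] r by simp
        have zA0: "zA x \<ge> 0" unfolding zA_def using ps xp assms(2,3) thp[of SR]
          by (intro mult_nonneg_nonneg divide_nonneg_nonneg) auto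
        have UG: "upper_Gamma (real (m SR)) (zA x) = fact (m SR - 1) * (1 - erlang_CDF (m SR - 1) 1 (zA x))"
          using upper_Gamma_eq[OF zA0, of "m SR - 1"] assms(6)[of SR] by (simp add: Suc_diff_1 of_nat_diff)
        have G1: "Gamma (real (k + m SD)) = fact (m SD - 1 + k)" for k
          using Gamma_nat[of "k + m SD"] assms(6)[of SD] by (simp add: add.commute)
        have G2: "Gamma (real n + 1) = fact n" for n
          using Gamma_nat[of "Suc n"] by (simp add: add.commute)
        have G3: "Gamma (real (m SD)) = fact (m SD - 1)" "Gamma (real (m SR)) = fact (m SR - 1)"
          using Gamma_nat assms(6) by auto
        have GR: "Gamma (real (m RR)) \<noteq> 0" using Gamma_nat[of "m RR"] assms(6)[of RR] by simp
        have ex: "exp (- (\<beta> + x / \<theta> RR)) = exp (-\<beta>) * exp (- x / \<theta> RR)"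
          by (simp add: exp_add[symmetric])
        have hx: "h x = x ^ (m RR - 1) * exp (- x / \<theta> RR) / (Gamma (real (m RR)) * \<theta> RR ^ m RR)
             * (1 - erlang_CDF (m SR - 1) 1 (zA x))"
          unfolding h_def gamma_density_def using xp by simp
        show "(let \<beta> = Psi r Cx / (Pr * \<theta> RD * (1 - Cx\<^sup>2)) in
             \<Sum>n<m RD. \<Sum>k\<le>n.
               real (n choose k) * Ps ^ k * Gamma (real (k + m SD)) / Gamma (real n + 1) *
               (x ^ (m RR - 1) *
                upper_Gamma (real (m SR))
                  ((Pr * x + 1) / (Ps * \<theta> SR) * Psi r (Pr * x * Cx / (Pr * x + 1))) *
                \<beta> ^ n * exp (- (\<beta> + x / \<theta> RR)))
               / (Gamma (real (m SD)) * Gamma (real (m RR)) * Gamma (real (m SR)) *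
                  \<theta> SD ^ m SD * \<theta> RR ^ m RR * (Ps * \<beta> + 1 / \<theta> SD) ^ (k + m SD))) = Q * h x"
          unfolding Let_def \<beta>_def[symmetric] L_def[symmetric] zA_def[symmetric] UG G1 G2 G3 ex hx Q_def
          unfolding sum_distrib_right
        proof (intro sum.cong refl)
          fix n k
          show "real (n choose k) * Ps ^ k * fact (m SD - 1 + k) / fact n *
               (x ^ (m RR - 1) * (fact (m SR - 1) * (1 - erlang_CDF (m SR - 1) 1 (zA x))) *
                \<beta> ^ n * (exp (-\<beta>) * exp (- x / \<theta> RR)))
               / (fact (m SD - 1) * Gamma (real (m RR)) * fact (m SR - 1) *
                  \<theta> SD ^ m SD * \<theta> RR ^ m RR * L ^ (k + m SD)) =
             real (n choose k) * Ps^k * \<beta>^n * exp (-\<beta>) / (fact n * \<theta> SD^m SD * L^m SD)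
              * (fact (m SD - 1 + k) / (fact (m SD - 1) * L^k)) *
             (x ^ (m RR - 1) * exp (- x / \<theta> RR) / (Gamma (real (m RR)) * \<theta> RR ^ m RR)
              * (1 - erlang_CDF (m SR - 1) 1 (zA x)))"
            by (rule term_eq) (use GR thp[of SD] thp[of RR] Lp in auto)
        qed
      qed
    qed
    also have "\<dots> = Q * (LBINT x:{0<..}. h x)" by simp
    finally show "measure M {\<omega>\<in>space M. r < Z \<omega>} = (LBINT x:{0<..}.
            (let \<beta> = Psi r Cx / (Pr * \<theta> RD * (1 - Cx\<^sup>2)) in
             \<Sum>n<m RD. \<Sum>k\<le>n.
               real (n choose k) * Ps ^ k * Gamma (real (k + m SD)) / Gamma (real n + 1) *
               (x ^ (m RR - 1) *
                upper_Gamma (real (m SR))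
                  ((Pr * x + 1) / (Ps * \<theta> SR) * Psi r (Pr * x * Cx / (Pr * x + 1))) *
                \<beta> ^ n * exp (- (\<beta> + x / \<theta> RR)))
               / (Gamma (real (m SD)) * Gamma (real (m RR)) * Gamma (real (m SR)) *
                  \<theta> SD ^ m SD * \<theta> RR ^ m RR * (Ps * \<beta> + 1 / \<theta> SD) ^ (k + m SD))))"
      using ind_split PA PB by simp
  qed
qed



end
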